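(* Fix $p\in[0,1]$ and a sequence $\{\gamma_n\}$ with $\gamma_n\in[0,\frac12]$, $\gamma_n/\sqrt{\log n/n}\to\infty$ and $\gamma_n\to0$. For each $n$ let $\mathcal G_n(p)$ be the set of all graphs $G=(\mathcal V,\mathcal E)$ with $n$ vertices such that (1) every vertex has degree between $pn(1-\gamma_n)$ and $pn(1+\gamma_n)$, and (2) for all $u,v\in\mathcal V$, $|\mathcal N(u)\cap\mathcal N(v)|/|\mathcal N(v)|\ge p(1-\gamma_n)$. Let $G$ be an Erdős–Rényi random graph with $n$ vertices and edge probability $p$. Then there is a sequence $\theta_n\to0$ such that for every $n$, $\mathbb P(G\in\mathcal G_n(p))\ge1-\theta_n$.
   Context: $\mathcal N(v)$ denotes the set of neighbors of $v$ in $G$. *)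

theory Defs
  imports Complex_Main
begin

definition all_edges :: "nat \<Rightarrow> nat set set" where
  "all_edges n = {{u, v} | u v. u < n \<and> v < n \<and> u \<noteq> v}"

definition simple_graphs :: "nat \<Rightarrow> nat set set set" where
  "simple_graphs n = Pow (all_edges n)"

definition nbrs :: "nat set set \<Rightarrow> nat \<Rightarrow> nat set" where
  "nbrs E v = {u. {u, v} \<in> E}"

definition in_Gn :: "nat \<Rightarrow> real \<Rightarrow> real \<Rightarrow> nat set set \<Rightarrow> bool" where
  "in_Gn n p \<gamma> E \<longleftrightarrow>
     (\<forall>v<n. p * real n * (1 - \<gamma>) \<le> real (card (nbrs E v))
             \<and> real (card (nbrs E v)) \<le> p * real n * (1 + \<gamma>))
   \<and> (\<forall>u<n. \<forall>v<n. real (card (nbrs E u \<inter> nbrs E v)) / real (card (nbrs E v))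
                     \<ge> p * (1 - \<gamma>))"

definition er_prob :: "nat \<Rightarrow> real \<Rightarrow> (nat set set \<Rightarrow> bool) \<Rightarrow> real" where
  "er_prob n p P = (\<Sum>E \<in> {E \<in> simple_graphs n. P E}.
       p ^ card E * (1 - p) ^ (card (all_edges n) - card E))"

end

theory Submission
  imports Defs "HOL-Probability.Probability"
begin


lemma hoeff_block:
  fixes A :: "'a set" and L :: "'b set" and K :: "'b \<Rightarrow> 'a set"
    and F :: "'b \<Rightarrow> bool \<Rightarrow> bool \<Rightarrow> real" and a b :: "'b \<Rightarrow> real"
  assumes finA: "finite A" and finL: "finite L"
    and KA: "\<And>w. w \<in> L \<Longrightarrow> K w \<subseteq> A" and disj: "disjoint_family_on K L"
    and e1: "\<And>w. w \<in> L \<Longrightarrow> e1 w \<in> K w" and e2: "\<And>w. w \<in> L \<Longrightarrow> e2 w \<in> K w"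
    and Fab: "\<And>w x y. w \<in> L \<Longrightarrow> F w x y \<in> {a w..b w}"
    and eps: "\<epsilon> \<ge> 0" and pos: "(\<Sum>w\<in>L. (b w - a w)\<^sup>2) > 0"
  shows "measure_pmf.prob (Pi_pmf A False (\<lambda>_. bernoulli_pmf p))
           {f. (\<Sum>w\<in>L. F w (f (e1 w)) (f (e2 w))) \<le>
               (\<Sum>w\<in>L. measure_pmf.expectation (Pi_pmf A False (\<lambda>_. bernoulli_pmf p))
                    (\<lambda>f. F w (f (e1 w)) (f (e2 w)))) - \<epsilon>}
         \<le> exp (-2 * \<epsilon>\<^sup>2 / (\<Sum>w\<in>L. (b w - a w)\<^sup>2))"
proof -
  define M where "M = measure_pmf (Pi_pmf A False (\<lambda>_. bernoulli_pmf p))"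
  interpret P: prob_space M unfolding M_def by (rule measure_pmf.prob_space_axioms)
  have ind0: "P.indep_vars (\<lambda>_. count_space UNIV) (\<lambda>x f. f x) A"
    unfolding M_def by (rule indep_vars_Pi_pmf[OF finA])
  have ind1: "P.indep_vars (\<lambda>w. PiM (K w) (\<lambda>_. count_space UNIV))
      (\<lambda>w f. restrict (\<lambda>i. f i) (K w)) L"
    by (rule P.indep_vars_restrict[OF ind0 KA disj])
  have meas: "(\<lambda>g. F w (g (e1 w)) (g (e2 w))) \<in> measurable (PiM (K w) (\<lambda>_. count_space UNIV)) borel"
    if w: "w \<in> L" for w
  proof -
    have eq: "(\<lambda>g. F w (g (e1 w)) (g (e2 w))) = (\<lambda>g. if g (e1 w) then (if g (e2 w) then F w True True else F w True False)
         else (if g (e2 w) then F w False True else F w False False))"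
      by (intro ext) auto
    have m1: "(\<lambda>g. g (e1 w)) \<in> measurable (PiM (K w) (\<lambda>_. count_space UNIV)) (count_space UNIV)"
      using e1[OF w] by (rule measurable_component_singleton)
    have m2: "(\<lambda>g. g (e2 w)) \<in> measurable (PiM (K w) (\<lambda>_. count_space UNIV)) (count_space UNIV)"
      using e2[OF w] by (rule measurable_component_singleton)
    have s1: "{g\<in>space (PiM (K w) (\<lambda>_. count_space UNIV)). g (e1 w)} \<in> sets (PiM (K w) (\<lambda>_. count_space UNIV))"
      using measurable_sets[OF m1, of "{True}"] by (simp add: vimage_def Int_def conj_commute)
    have s2: "{g\<in>space (PiM (K w) (\<lambda>_. count_space UNIV)). g (e2 w)} \<in> sets (PiM (K w) (\<lambda>_. count_space UNIV))"
      using measurable_sets[OF m2, of "{True}"] by (simp add: vimage_def Int_def conj_commute)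
    show ?thesis unfolding eq
      using s1 s2 by (intro measurable_If) (auto simp: pred_def)
  qed
  have ind: "P.indep_vars (\<lambda>_. borel) (\<lambda>w f. F w (f (e1 w)) (f (e2 w))) L"
    using P.indep_vars_compose2[OF ind1 meas] e1 e2
    by (simp cong: P.indep_vars_cong)
  interpret H: Hoeffding_ineq M L "\<lambda>w f. F w (f (e1 w)) (f (e2 w))" a b
      "(\<Sum>w\<in>L. P.expectation (\<lambda>f. F w (f (e1 w)) (f (e2 w))))"
    by unfold_locales (use finL ind Fab in auto)
  show ?thesis
    using H.Hoeffding_ineq_le[OF eps pos] unfolding M_def by simp
qed



lemma finite_all_edges: "finite (all_edges n)"
proof -
  have "all_edges n \<subseteq> (\<lambda>(u,v). {u,v}) ` ({..<n} \<times> {..<n})"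
    unfolding all_edges_def by auto
  thus ?thesis by (rule finite_subset) auto
qed

lemma er_prob_pmf:
  assumes p: "0 \<le> p" "p \<le> 1"
  shows "er_prob n p P = measure_pmf.prob (Pi_pmf (all_edges n) False (\<lambda>_. bernoulli_pmf p))
            {f. P {e\<in>all_edges n. f e}}"
proof -
  define A where "A = all_edges n"
  define C where "C = Pi_pmf A False (\<lambda>_. bernoulli_pmf p)"
  define S where "S = {f. P {e\<in>A. f e}}"
  define F where "F = (\<lambda>E x. x \<in> E) ` Pow A"
  have finA: "finite A" unfolding A_def by (rule finite_all_edges)
  have setC: "set_pmf C \<subseteq> F"
  proof
    fix f assume "f \<in> set_pmf C"
    hence "\<forall>x. x \<notin> A \<longrightarrow> f x = False" using set_Pi_pmf_subset[OF finA, of False "\<lambda>_. bernoulli_pmf p"] unfolding C_def by blast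
    hence "f = (\<lambda>x. x \<in> {e\<in>A. f e})" by auto
    thus "f \<in> F" unfolding F_def by blast
  qed
  have "measure_pmf.prob C S = measure_pmf.prob C (S \<inter> F)"
  proof -
    have "measure_pmf.prob C (S \<inter> F) = measure_pmf.prob C (S \<inter> F \<inter> set_pmf C)"
      by (rule measure_Int_set_pmf[symmetric])
    also have "S \<inter> F \<inter> set_pmf C = S \<inter> set_pmf C" using setC by blast
    also have "measure_pmf.prob C \<dots> = measure_pmf.prob C S" by (rule measure_Int_set_pmf)
    finally show ?thesis by simp
  qed
  also have "S \<inter> F = (\<lambda>E x. x \<in> E) ` {E \<in> Pow A. P E}"
  proof -
    have "\<And>E. E \<subseteq> A \<Longrightarrow> {e\<in>A. e \<in> E} = E" by auto
    thus ?thesis unfolding S_def F_def by (auto simp: image_iff)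
  qed
  also have "measure_pmf.prob C \<dots> = (\<Sum>E\<in>{E \<in> Pow A. P E}. pmf C (\<lambda>x. x \<in> E))"
  proof -
    have inj: "inj_on (\<lambda>E x. x \<in> E) {E \<in> Pow A. P E}"
      by (rule inj_onI) (metis Collect_mem_eq)
    have fin: "finite {E \<in> Pow A. P E}" using finA by simp
    show ?thesis
      by (subst measure_measure_pmf_finite) (use fin inj in \<open>simp_all add: sum.reindex\<close>)
  qed
  also have "\<dots> = (\<Sum>E\<in>{E \<in> Pow A. P E}. p ^ card E * (1 - p) ^ (card A - card E))"
  proof (rule sum.cong[OF refl])
    fix E assume E: "E \<in> {E \<in> Pow A. P E}"
    hence EA: "E \<subseteq> A" by auto
    have "pmf C (\<lambda>x. x \<in> E) = (\<Prod>x\<in>A. pmf (bernoulli_pmf p) (x \<in> E))"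
      unfolding C_def using EA by (subst pmf_Pi[OF finA]) auto
    also have "\<dots> = (\<Prod>x\<in>A. if x \<in> E then p else 1 - p)"
      using p by (intro prod.cong) auto
    also have "\<dots> = (\<Prod>x\<in>A \<inter> {x. x \<in> E}. p) * (\<Prod>x\<in>A \<inter> - {x. x \<in> E}. 1 - p)"
      by (rule prod.If_cases[OF finA])
    also have "A \<inter> {x. x \<in> E} = E" using EA by auto
    also have "A \<inter> - {x. x \<in> E} = A - E" by auto
    also have "(\<Prod>x\<in>E. p) * (\<Prod>x\<in>A - E. 1 - p) = p ^ card E * (1 - p) ^ (card A - card E)"
      using EA finA by (simp add: card_Diff_subset finite_subset)
    finally show "pmf C (\<lambda>x. x \<in> E) = p ^ card E * (1 - p) ^ (card A - card E)" .
  qed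
  finally show ?thesis unfolding er_prob_def simple_graphs_def A_def C_def S_def by simp
qed



lemma card_as_sum: "finite X \<Longrightarrow> real (card {w\<in>X. P w}) = (\<Sum>w\<in>X. if P w then 1 else 0)"
  by (simp add: sum.inter_filter[symmetric])

lemma edge_iff: "{w, v} \<in> all_edges n \<longleftrightarrow> w < n \<and> v < n \<and> w \<noteq> v"
  unfolding all_edges_def by (auto simp: doubleton_eq_iff)

lemma nbrs_eq: "v < n \<Longrightarrow> nbrs {e\<in>all_edges n. f e} v = {w\<in>{..<n}. w \<noteq> v \<and> f {w, v}}"
  unfolding nbrs_def by (auto simp: edge_iff)

lemma exp_one:
  assumes "finite A" "e \<in> A" "0 \<le> p" "p \<le> 1"
  shows "measure_pmf.expectation (Pi_pmf A False (\<lambda>_. bernoulli_pmf p)) (\<lambda>f. if f e then 1 else 0 :: real) = p"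
proof -
  have "measure_pmf.expectation (Pi_pmf A False (\<lambda>_. bernoulli_pmf p)) (\<lambda>f. if f e then 1 else 0 :: real)
     = measure_pmf.expectation (map_pmf (\<lambda>f. f e) (Pi_pmf A False (\<lambda>_. bernoulli_pmf p))) (\<lambda>b. if b then 1 else 0 :: real)"
    by simp
  also have "map_pmf (\<lambda>f. f e) (Pi_pmf A False (\<lambda>_. bernoulli_pmf p)) = bernoulli_pmf p"
    using assms by (simp add: Pi_pmf_component)
  finally show ?thesis using assms by simp
qed

lemma exp_two:
  assumes A: "finite A" and e: "e1 \<in> A" "e2 \<in> A" "e1 \<noteq> e2" and p: "0 \<le> p" "p \<le> 1"
  shows "measure_pmf.expectation (Pi_pmf A False (\<lambda>_. bernoulli_pmf p))
           (\<lambda>f. if f e1 \<and> f e2 then 1 else 0 :: real) = p * p"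
proof -
  define g where "g = (\<lambda>x (b::bool). if x = e1 \<or> x = e2 then (if b then 1 else 0) else (1::real))"
  have eq: "(\<lambda>f. if f e1 \<and> f e2 then 1 else 0 :: real) = (\<lambda>f. \<Prod>x\<in>A. g x (f x))"
  proof
    fix f :: "'a \<Rightarrow> bool"
    have "(\<Prod>x\<in>A. g x (f x)) = (\<Prod>x\<in>{e1,e2}. g x (f x))"
      using e A by (intro prod.mono_neutral_right) (auto simp: g_def)
    thus "(if f e1 \<and> f e2 then 1 else 0) = (\<Prod>x\<in>A. g x (f x))"
      using e by (simp add: g_def)
  qed
  have "measure_pmf.expectation (Pi_pmf A False (\<lambda>_. bernoulli_pmf p)) (\<lambda>f. \<Prod>x\<in>A. g x (f x))
     = (\<Prod>x\<in>A. measure_pmf.expectation (bernoulli_pmf p) (g x))"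
    by (rule expectation_prod_Pi_pmf[OF A]) (auto simp: g_def intro: integrable_measure_pmf_finite)
  also have "\<dots> = (\<Prod>x\<in>{e1,e2}. measure_pmf.expectation (bernoulli_pmf p) (g x))"
    using e A p by (intro prod.mono_neutral_right) (auto simp: g_def)
  also have "\<dots> = p * p" using e p by (simp add: g_def)
  finally show ?thesis unfolding eq .
qed



definition coins :: "nat \<Rightarrow> real \<Rightarrow> (nat set \<Rightarrow> bool) pmf" where
  "coins n p = Pi_pmf (all_edges n) False (\<lambda>_. bernoulli_pmf p)"

lemma card_L1: "v < n \<Longrightarrow> card {w\<in>{..<n}. w \<noteq> v} = n - 1"
proof -
  assume "v < n"
  have "{w\<in>{..<n}. w \<noteq> v} = {..<n} - {v}" by auto
  thus ?thesis using \<open>v < n\<close> by simp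
qed

lemma card_L2: "u < n \<Longrightarrow> v < n \<Longrightarrow> u \<noteq> v \<Longrightarrow> card {w\<in>{..<n}. w \<noteq> u \<and> w \<noteq> v} = n - 2"
proof -
  assume "u < n" "v < n" "u \<noteq> v"
  have "{w\<in>{..<n}. w \<noteq> u \<and> w \<noteq> v} = {..<n} - {u,v}" by auto
  thus ?thesis using \<open>u < n\<close> \<open>v < n\<close> \<open>u \<noteq> v\<close> by (simp add: card_Diff_subset)
qed

lemma deg_low:
  assumes v: "v < n" and n: "n \<ge> 2" and p: "0 \<le> p" "p \<le> 1" and eps: "\<epsilon> \<ge> 0"
  shows "measure_pmf.prob (coins n p)
     {f. (\<Sum>w\<in>{w\<in>{..<n}. w \<noteq> v}. if f {w,v} then 1 else 0) \<le> real (n - 1) * p - \<epsilon>}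
     \<le> exp (-2 * \<epsilon>\<^sup>2 / real (n - 1))"
proof -
  let ?L = "{w\<in>{..<n}. w \<noteq> v}"
  have cL: "card ?L = n - 1" using card_L1[OF v] .
  have mu: "(\<Sum>w\<in>?L. measure_pmf.expectation (coins n p) (\<lambda>f. if f {w,v} then 1 else 0 :: real))
       = real (n - 1) * p"
  proof -
    have "(\<Sum>w\<in>?L. measure_pmf.expectation (coins n p) (\<lambda>f. if f {w,v} then 1 else 0 :: real))
        = (\<Sum>w\<in>?L. p)"
      unfolding coins_def using v p by (intro sum.cong refl exp_one finite_all_edges) (auto simp: edge_iff)
    thus ?thesis using cL by simp
  qed
  note H = hoeff_block[of "all_edges n" ?L "\<lambda>w. {{w,v}}" "\<lambda>w. {w,v}" "\<lambda>w. {w,v}"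
      "\<lambda>w x y. if x then 1 else 0" "\<lambda>_. 0" "\<lambda>_. 1" \<epsilon> p]
  have disj: "disjoint_family_on (\<lambda>w. {{w, v}}) ?L"
    unfolding disjoint_family_on_def by (auto simp: doubleton_eq_iff)
  have "(\<Sum>w\<in>?L. ((\<lambda>_. 1::real) w - (\<lambda>_. 0) w)\<^sup>2) = real (n - 1)" using cL by simp
  moreover have "real (n - 1) > 0" using n by simp
  ultimately show ?thesis
    using H[OF finite_all_edges _ _ disj _ _ _ eps] v mu unfolding coins_def
    by (auto simp: edge_iff)
qed

lemma deg_high:
  assumes v: "v < n" and n: "n \<ge> 2" and p: "0 \<le> p" "p \<le> 1" and eps: "\<epsilon> \<ge> 0"
  shows "measure_pmf.prob (coins n p)
     {f. (\<Sum>w\<in>{w\<in>{..<n}. w \<noteq> v}. - (if f {w,v} then 1 else 0)) \<le> - (real (n - 1) * p) - \<epsilon>}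
     \<le> exp (-2 * \<epsilon>\<^sup>2 / real (n - 1))"
proof -
  let ?L = "{w\<in>{..<n}. w \<noteq> v}"
  have cL: "card ?L = n - 1" using card_L1[OF v] .
  have mu: "(\<Sum>w\<in>?L. measure_pmf.expectation (coins n p) (\<lambda>f. - (if f {w,v} then 1 else 0 :: real)))
       = - (real (n - 1) * p)"
  proof -
    have "(\<Sum>w\<in>?L. measure_pmf.expectation (coins n p) (\<lambda>f. - (if f {w,v} then 1 else 0 :: real)))
        = (\<Sum>w\<in>?L. - p)"
      unfolding coins_def using v p by (intro sum.cong refl) (auto simp: edge_iff exp_one finite_all_edges)
    thus ?thesis using cL by simp
  qed
  note H = hoeff_block[of "all_edges n" ?L "\<lambda>w. {{w,v}}" "\<lambda>w. {w,v}" "\<lambda>w. {w,v}"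
      "\<lambda>w x y. - (if x then 1 else 0)" "\<lambda>_. -1" "\<lambda>_. 0" \<epsilon> p]
  have disj: "disjoint_family_on (\<lambda>w. {{w, v}}) ?L"
    unfolding disjoint_family_on_def by (auto simp: doubleton_eq_iff)
  have "(\<Sum>w\<in>?L. ((\<lambda>_. 0::real) w - (\<lambda>_. -1) w)\<^sup>2) = real (n - 1)" using cL by simp
  moreover have "real (n - 1) > 0" using n by simp
  ultimately show ?thesis
    using H[OF finite_all_edges _ _ disj _ _ _ eps] v mu unfolding coins_def
    by (auto simp: edge_iff)
qed

lemma common_low:
  assumes u: "u < n" and v: "v < n" and uv: "u \<noteq> v" and n: "n \<ge> 3"
    and p: "0 \<le> p" "p \<le> 1" and c: "0 \<le> c" "c \<le> 1" and eps: "\<epsilon> \<ge> 0"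
  shows "measure_pmf.prob (coins n p)
     {f. (\<Sum>w\<in>{w\<in>{..<n}. w \<noteq> u \<and> w \<noteq> v}.
            (if f {w,u} \<and> f {w,v} then 1 else 0) - c * (if f {w,v} then 1 else 0))
         \<le> real (n - 2) * (p * p - c * p) - \<epsilon>}
     \<le> exp (-2 * \<epsilon>\<^sup>2 / real (n - 2))"
proof -
  let ?L = "{w\<in>{..<n}. w \<noteq> u \<and> w \<noteq> v}"
  have cL: "card ?L = n - 2" using card_L2[OF u v uv] .
  have mu: "(\<Sum>w\<in>?L. measure_pmf.expectation (coins n p)
      (\<lambda>f. (if f {w,u} \<and> f {w,v} then 1 else 0) - c * (if f {w,v} then 1 else 0 :: real)))
       = real (n - 2) * (p * p - c * p)"
  proof -
    have "(\<Sum>w\<in>?L. measure_pmf.expectation (coins n p)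
      (\<lambda>f. (if f {w,u} \<and> f {w,v} then 1 else 0) - c * (if f {w,v} then 1 else 0 :: real)))
        = (\<Sum>w\<in>?L. p * p - c * p)"
    proof (intro sum.cong refl)
      fix w assume w: "w \<in> ?L"
      have e1: "{w,u} \<in> all_edges n" "{w,v} \<in> all_edges n" "{w,u} \<noteq> {w,v}"
        using w u v uv by (auto simp: edge_iff doubleton_eq_iff)
      let ?C = "measure_pmf (Pi_pmf (all_edges n) False (\<lambda>_. bernoulli_pmf p))"
      have i1: "integrable ?C (\<lambda>f. if f {w,u} \<and> f {w,v} then 1 else 0 :: real)"
        by (intro measure_pmf.integrable_const_bound[where B=1]) auto
      have i2: "integrable ?C (\<lambda>f. c * (if f {w,v} then 1 else 0 :: real))"
        by (intro measure_pmf.integrable_const_bound[where B=c]) (use c in auto)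
      have "measure_pmf.expectation (coins n p)
      (\<lambda>f. (if f {w,u} \<and> f {w,v} then 1 else 0) - c * (if f {w,v} then 1 else 0 :: real))
        = measure_pmf.expectation (coins n p) (\<lambda>f. if f {w,u} \<and> f {w,v} then 1 else 0 :: real)
          - c * measure_pmf.expectation (coins n p) (\<lambda>f. if f {w,v} then 1 else 0 :: real)"
        unfolding coins_def using i1 i2 by (simp add: Bochner_Integration.integral_diff)
      also have "\<dots> = p * p - c * p"
        unfolding coins_def using e1 p by (simp add: exp_one exp_two finite_all_edges)
      finally show "measure_pmf.expectation (coins n p)
      (\<lambda>f. (if f {w,u} \<and> f {w,v} then 1 else 0) - c * (if f {w,v} then 1 else 0 :: real)) = p * p - c * p" .
    qed
    thus ?thesis using cL by simp
  qed
  note H = hoeff_block[of "all_edges n" ?L "\<lambda>w. {{w,u},{w,v}}" "\<lambda>w. {w,u}" "\<lambda>w. {w,v}"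
      "\<lambda>w x y. (if x \<and> y then 1 else 0) - c * (if y then 1 else 0)" "\<lambda>_. -c" "\<lambda>_. 1 - c" \<epsilon> p]
  have disj: "disjoint_family_on (\<lambda>w. {{w,u},{w,v}}) ?L"
    unfolding disjoint_family_on_def using uv by (auto simp: doubleton_eq_iff)
  have "(\<Sum>w\<in>?L. ((\<lambda>_. 1 - c) w - (\<lambda>_. -c) w)\<^sup>2) = real (n - 2)" using cL by simp
  moreover have "real (n - 2) > 0" using n by simp
  moreover have "\<And>w x y. w \<in> ?L \<Longrightarrow> (if x \<and> y then 1 else 0) - c * (if y then 1 else 0) \<in> {-c..1-c}"
    using c by auto
  ultimately show ?thesis
    using H[OF finite_all_edges _ _ disj _ _ _ eps] u v uv mu unfolding coins_def
    by (auto simp: edge_iff)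
qed



lemma good_of_not_bad:
  fixes f :: "nat set \<Rightarrow> bool"
  assumes p: "0 \<le> p" "p \<le> 1" and g: "0 \<le> \<gamma>" "\<gamma> \<le> 1/2"
    and c: "c = p * (1 - \<gamma>)" and e1: "\<epsilon>1 = p * (real n * \<gamma> - 1)"
    and e2: "\<epsilon>2 = real (n - 2) * p\<^sup>2 * \<gamma> - 1"
    and DL: "\<And>v. v < n \<Longrightarrow> (\<Sum>w\<in>{w\<in>{..<n}. w \<noteq> v}. if f {w,v} then 1 else 0) > real (n - 1) * p - \<epsilon>1"
    and DH: "\<And>v. v < n \<Longrightarrow> (\<Sum>w\<in>{w\<in>{..<n}. w \<noteq> v}. - (if f {w,v} then 1 else 0)) > - (real (n - 1) * p) - \<epsilon>1"
    and CL: "\<And>u v. u < n \<Longrightarrow> v < n \<Longrightarrow> u \<noteq> v \<Longrightarrow>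
       (\<Sum>w\<in>{w\<in>{..<n}. w \<noteq> u \<and> w \<noteq> v}.
            (if f {w,u} \<and> f {w,v} then 1 else 0) - c * (if f {w,v} then 1 else 0))
         > real (n - 2) * (p * p - c * p) - \<epsilon>2"
  shows "in_Gn n p \<gamma> {e\<in>all_edges n. f e}"
proof -
  let ?E = "{e\<in>all_edges n. f e}"
  have deg: "real (card (nbrs ?E v)) = (\<Sum>w\<in>{w\<in>{..<n}. w \<noteq> v}. if f {w,v} then 1 else 0)"
    if "v < n" for v
  proof -
    have "real (card (nbrs ?E v)) = real (card {w\<in>{w\<in>{..<n}. w \<noteq> v}. f {w,v}})"
      using nbrs_eq[OF that, of f] by (intro arg_cong[where f="\<lambda>X. real (card X)"]) auto
    also have "\<dots> = (\<Sum>w\<in>{w\<in>{..<n}. w \<noteq> v}. if f {w,v} then 1 else 0)"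
      by (rule card_as_sum) simp
    finally show ?thesis .
  qed
  have degb: "p * real n * (1 - \<gamma>) < real (card (nbrs ?E v)) \<and>
              real (card (nbrs ?E v)) \<le> p * real n * (1 + \<gamma>)" if v: "v < n" for v
  proof -
    have n1: "real (n - 1) = real n - 1" using v by simp
    have "real (n - 1) * p - \<epsilon>1 = p * real n * (1 - \<gamma>)" unfolding e1 n1 by (simp add: algebra_simps)
    moreover have "real (n - 1) * p + \<epsilon>1 \<le> p * real n * (1 + \<gamma>)" unfolding e1 n1
      using p by (simp add: algebra_simps)
    ultimately show ?thesis using DL[OF v] DH[OF v] deg[OF v] by (simp add: sum_negf)
  qed
  have pos: "real (card (nbrs ?E v)) > 0" if v: "v < n" for v
  proof -
    have "p * real n * (1 - \<gamma>) \<ge> 0" using p g by simp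
    thus ?thesis using degb[OF v] by linarith
  qed
  have cle: "c \<le> 1" unfolding c using p g by (simp add: mult_le_one)
  have c0: "0 \<le> c" unfolding c using p g by simp
  have ratio: "real (card (nbrs ?E u \<inter> nbrs ?E v)) / real (card (nbrs ?E v)) \<ge> p * (1 - \<gamma>)"
    if u: "u < n" and v: "v < n" for u v
  proof (cases "u = v")
    case True
    thus ?thesis using pos[OF v] cle unfolding c by simp
  next
    case uv: False
    let ?L = "{w\<in>{..<n}. w \<noteq> u \<and> w \<noteq> v}"
    have "nbrs ?E u \<inter> nbrs ?E v = {w\<in>?L. f {w,u} \<and> f {w,v}}"
      using nbrs_eq[OF u, of f] nbrs_eq[OF v, of f] by auto
    hence com: "real (card (nbrs ?E u \<inter> nbrs ?E v)) = (\<Sum>w\<in>?L. if f {w,u} \<and> f {w,v} then 1 else 0)"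
      using card_as_sum[of ?L "\<lambda>w. f {w,u} \<and> f {w,v}"] by simp
    have "{w\<in>{..<n}. w \<noteq> v} = insert u ?L" using u uv by auto
    hence dv: "real (card (nbrs ?E v)) = (if f {u,v} then 1 else 0) + (\<Sum>w\<in>?L. if f {w,v} then 1 else 0)"
      using deg[OF v] by simp
    have mu: "real (n - 2) * (p * p - c * p) - \<epsilon>2 = 1"
      unfolding e2 c by (simp add: algebra_simps power2_eq_square)
    have "real (card (nbrs ?E u \<inter> nbrs ?E v)) - c * real (card (nbrs ?E v))
        = (\<Sum>w\<in>?L. (if f {w,u} \<and> f {w,v} then 1 else 0) - c * (if f {w,v} then 1 else 0))
          - c * (if f {u,v} then 1 else 0)"
      unfolding com dv by (simp add: sum_subtractf sum_distrib_left algebra_simps)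
    also have "\<dots> \<ge> 0"
    proof -
      have "c * (if f {u,v} then 1 else 0) \<le> 1" using cle c0 by simp
      thus ?thesis using CL[OF u v uv] mu by linarith
    qed
    finally have "c * real (card (nbrs ?E v)) \<le> real (card (nbrs ?E u \<inter> nbrs ?E v))" by simp
    thus ?thesis using pos[OF v] unfolding c by (simp add: pos_le_divide_eq)
  qed
  show ?thesis unfolding in_Gn_def
  proof (intro conjI allI impI)
    fix v assume v: "v < n"
    show "p * real n * (1 - \<gamma>) \<le> real (card (nbrs ?E v))" using degb[OF v] by linarith
    show "real (card (nbrs ?E v)) \<le> p * real n * (1 + \<gamma>)" using degb[OF v] by linarith
  next
    fix u v assume "u < n" "v < n"
    thus "p * (1 - \<gamma>) \<le> real (card (nbrs ?E u \<inter> nbrs ?E v)) / real (card (nbrs ?E v))"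
      by (rule ratio)
  qed
qed



lemma main_bound:
  assumes p: "0 \<le> p" "p \<le> 1" and g: "0 \<le> \<gamma>" "\<gamma> \<le> 1/2" and n: "n \<ge> 4"
    and e1: "\<epsilon>1 = p * (real n * \<gamma> - 1)" and e1p: "\<epsilon>1 \<ge> 0"
    and e2: "\<epsilon>2 = real (n - 2) * p\<^sup>2 * \<gamma> - 1" and e2p: "\<epsilon>2 \<ge> 0"
  shows "1 - er_prob n p (in_Gn n p \<gamma>) \<le>
     real n * (2 * exp (-2 * \<epsilon>1\<^sup>2 / real (n - 1))) + real n * real n * exp (-2 * \<epsilon>2\<^sup>2 / real (n - 2))"
proof -
  define c where "c = p * (1 - \<gamma>)"
  have c0: "0 \<le> c" and c1: "c \<le> 1" unfolding c_def using p g by (auto simp: mult_le_one)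
  let ?M = "coins n p"
  define G where "G = {f. in_Gn n p \<gamma> {e\<in>all_edges n. f e}}"
  define BL where "BL = (\<lambda>v. {f. (\<Sum>w\<in>{w\<in>{..<n}. w \<noteq> v}. if f {w,v} then 1 else 0) \<le> real (n - 1) * p - \<epsilon>1})"
  define BH where "BH = (\<lambda>v. {f. (\<Sum>w\<in>{w\<in>{..<n}. w \<noteq> v}. - (if f {w,v} then 1 else 0)) \<le> - (real (n - 1) * p) - \<epsilon>1})"
  define BC where "BC = (\<lambda>(u,v). {f. (\<Sum>w\<in>{w\<in>{..<n}. w \<noteq> u \<and> w \<noteq> v}.
            (if f {w,u} \<and> f {w,v} then 1 else 0) - c * (if f {w,v} then 1 else 0))
         \<le> real (n - 2) * (p * p - c * p) - \<epsilon>2})"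
  define Off where "Off = {(u,v). u < n \<and> v < n \<and> u \<noteq> v}"
  have finOff: "finite Off" and cardOff: "card Off \<le> n * n"
  proof -
    have sub: "Off \<subseteq> {..<n} \<times> {..<n}" unfolding Off_def by auto
    show "finite Off" by (rule finite_subset[OF sub]) auto
    show "card Off \<le> n * n" using card_mono[OF _ sub] by simp
  qed
  have er: "er_prob n p (in_Gn n p \<gamma>) = measure_pmf.prob ?M G"
    unfolding coins_def G_def by (rule er_prob_pmf[OF p])
  have s0: "1 - measure_pmf.prob ?M G = measure_pmf.prob ?M (UNIV - G)"
    using measure_pmf.prob_compl[of G ?M] by simp
  have sub: "UNIV - G \<subseteq> (\<Union>v\<in>{..<n}. BL v \<union> BH v) \<union> (\<Union>x\<in>Off. BC x)"
  proof
    fix f assume f: "f \<in> UNIV - G"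
    show "f \<in> (\<Union>v\<in>{..<n}. BL v \<union> BH v) \<union> (\<Union>x\<in>Off. BC x)"
    proof (rule ccontr)
      assume nb: "f \<notin> (\<Union>v\<in>{..<n}. BL v \<union> BH v) \<union> (\<Union>x\<in>Off. BC x)"
      have "in_Gn n p \<gamma> {e\<in>all_edges n. f e}"
      proof (rule good_of_not_bad[OF p g c_def e1 e2])
        fix v assume v: "v < n"
        show "(\<Sum>w\<in>{w\<in>{..<n}. w \<noteq> v}. if f {w,v} then 1 else 0) > real (n - 1) * p - \<epsilon>1"
          using nb v unfolding BL_def by (auto simp: not_le)
        show "(\<Sum>w\<in>{w\<in>{..<n}. w \<noteq> v}. - (if f {w,v} then 1 else 0)) > - (real (n - 1) * p) - \<epsilon>1"
          using nb v unfolding BH_def by (auto simp del: sum_negf simp: not_le)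
      next
        fix u v assume "u < n" "v < n" "u \<noteq> v"
        hence "(u,v) \<in> Off" unfolding Off_def by simp
        thus "(\<Sum>w\<in>{w\<in>{..<n}. w \<noteq> u \<and> w \<noteq> v}.
            (if f {w,u} \<and> f {w,v} then 1 else 0) - c * (if f {w,v} then 1 else 0))
         > real (n - 2) * (p * p - c * p) - \<epsilon>2"
          using nb unfolding BC_def by (auto simp: not_le)
      qed
      thus False using f unfolding G_def by simp
    qed
  qed
  have s1: "measure_pmf.prob ?M (UNIV - G) \<le> measure_pmf.prob ?M ((\<Union>v\<in>{..<n}. BL v \<union> BH v) \<union> (\<Union>x\<in>Off. BC x))"
    using sub by (intro measure_pmf.finite_measure_mono) auto
  have s2: "measure_pmf.prob ?M ((\<Union>v\<in>{..<n}. BL v \<union> BH v) \<union> (\<Union>x\<in>Off. BC x)) \<le> measure_pmf.prob ?M (\<Union>v\<in>{..<n}. BL v \<union> BH v) + measure_pmf.prob ?M (\<Union>x\<in>Off. BC x)"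
    by (rule measure_subadditive) (auto simp: measure_pmf.emeasure_eq_measure)
  have "measure_pmf.prob ?M (\<Union>v\<in>{..<n}. BL v \<union> BH v) \<le> (\<Sum>v\<in>{..<n}. measure_pmf.prob ?M (BL v \<union> BH v))"
    by (rule measure_pmf.finite_measure_subadditive_finite) auto
  also have "\<dots> \<le> (\<Sum>v\<in>{..<n}. 2 * exp (-2 * \<epsilon>1\<^sup>2 / real (n - 1)))"
  proof (rule sum_mono)
    fix v assume "v \<in> {..<n}"
    hence v: "v < n" by simp
    have "measure_pmf.prob ?M (BL v \<union> BH v) \<le> measure_pmf.prob ?M (BL v) + measure_pmf.prob ?M (BH v)"
      by (rule measure_subadditive) (auto simp: measure_pmf.emeasure_eq_measure)
    also have "measure_pmf.prob ?M (BL v) \<le> exp (-2 * \<epsilon>1\<^sup>2 / real (n - 1))"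
      unfolding BL_def by (rule deg_low[OF v _ p e1p]) (use n in simp)
    also have "measure_pmf.prob ?M (BH v) \<le> exp (-2 * \<epsilon>1\<^sup>2 / real (n - 1))"
      unfolding BH_def by (rule deg_high[OF v _ p e1p]) (use n in simp)
    finally show "measure_pmf.prob ?M (BL v \<union> BH v) \<le> 2 * exp (-2 * \<epsilon>1\<^sup>2 / real (n - 1))" by simp
  qed
  also have "(\<Sum>v\<in>{..<n}. 2 * exp (-2 * \<epsilon>1\<^sup>2 / real (n - 1))) = real n * (2 * exp (-2 * \<epsilon>1\<^sup>2 / real (n - 1)))"
    by (simp only: sum_constant card_lessThan)
  finally have s3: "measure_pmf.prob ?M (\<Union>v\<in>{..<n}. BL v \<union> BH v) \<le> real n * (2 * exp (-2 * \<epsilon>1\<^sup>2 / real (n - 1)))" .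
  have "measure_pmf.prob ?M (\<Union>x\<in>Off. BC x) \<le> (\<Sum>x\<in>Off. measure_pmf.prob ?M (BC x))"
    by (rule measure_pmf.finite_measure_subadditive_finite[OF finOff]) auto
  also have "\<dots> \<le> (\<Sum>x\<in>Off. exp (-2 * \<epsilon>2\<^sup>2 / real (n - 2)))"
  proof (rule sum_mono)
    fix x assume "x \<in> Off"
    then obtain u v where x: "x = (u,v)" and u: "u < n" and v: "v < n" and uv: "u \<noteq> v"
      unfolding Off_def by auto
    show "measure_pmf.prob ?M (BC x) \<le> exp (-2 * \<epsilon>2\<^sup>2 / real (n - 2))"
      unfolding BC_def x by (simp only: case_prod_conv, rule common_low[OF u v uv _ p c0 c1 e2p]) (use n in simp)
  qed
  also have "\<dots> = real (card Off) * exp (-2 * \<epsilon>2\<^sup>2 / real (n - 2))" by simp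
  also have "\<dots> \<le> real n * real n * exp (-2 * \<epsilon>2\<^sup>2 / real (n - 2))"
  proof (rule mult_right_mono)
    show "real (card Off) \<le> real n * real n" using cardOff
      by (metis of_nat_le_iff of_nat_mult)
  qed simp
  finally have s4: "measure_pmf.prob ?M (\<Union>x\<in>Off. BC x) \<le> real n * real n * exp (-2 * \<epsilon>2\<^sup>2 / real (n - 2))" .
  show ?thesis unfolding er using s0 s1 s2 s3 s4 by linarith
qed



lemma asym_bound:
  assumes p: "0 < p" "p \<le> 1" and g: "0 \<le> \<gamma>" "\<gamma> \<le> 1/2" and n: "n \<ge> 4"
    and big: "real n * \<gamma>\<^sup>2 * p ^ 4 \<ge> 24 * ln (real n)"
  shows "1 - er_prob n p (in_Gn n p \<gamma>) \<le> 3 / real n"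
proof -
  define L where "L = ln (real n)"
  define N where "N = real n"
  have N4: "N \<ge> 4" unfolding N_def using n by simp
  have L1: "L \<ge> 1"
  proof -
    have "exp 1 \<le> (3::real)" by (rule exp_le)
    also have "3 \<le> N" using N4 by simp
    finally have "exp 1 \<le> N" .
    thus ?thesis unfolding L_def N_def[symmetric] using N4 by (simp add: ln_ge_iff)
  qed
  have big': "N * \<gamma>\<^sup>2 * p ^ 4 \<ge> 24 * L" using big unfolding N_def L_def .
  have p4: "p ^ 4 \<le> p ^ 2" using p by (simp add: power_decreasing)
  have p2: "p ^ 2 \<le> 1" using p by (simp add: power_le_one)
  have p4pos: "p ^ 4 > 0" using p by simp
  have gg: "2 * \<gamma>\<^sup>2 \<le> \<gamma>"
  proof -
    have "\<gamma> * (2 * \<gamma>) \<le> \<gamma> * 1" using g by (intro mult_left_mono) auto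
    thus ?thesis by (simp add: power2_eq_square algebra_simps)
  qed
  have ng: "N * \<gamma> \<ge> 2 * (N * \<gamma>\<^sup>2)"
  proof -
    have "N * (2 * \<gamma>\<^sup>2) \<le> N * \<gamma>" using gg N4 by (intro mult_left_mono) auto
    thus ?thesis by (simp add: algebra_simps)
  qed
  have A1: "N * \<gamma>\<^sup>2 \<ge> 24 * L" 
  proof -
    have "N * \<gamma>\<^sup>2 * p ^ 4 \<le> N * \<gamma>\<^sup>2 * 1" using p N4
      by (intro mult_left_mono) (auto simp: power_le_one)
    thus ?thesis using big' by simp
  qed
  have a: "N * \<gamma> \<ge> 2" using ng A1 L1 by linarith
  define e1 where "e1 = p * (N * \<gamma> - 1)"
  define e2 where "e2 = (N - 2) * p\<^sup>2 * \<gamma> - 1"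
  have e1b: "e1 \<ge> p * (N * \<gamma>) / 2" unfolding e1_def using a p by (simp add: field_simps)
  have pNg: "p\<^sup>2 * (N * \<gamma>) \<ge> 48 * L"
  proof -
    have "p\<^sup>2 * (N * \<gamma>) \<ge> p\<^sup>2 * (2 * (N * \<gamma>\<^sup>2))"
      using ng by (intro mult_left_mono) auto
    moreover have "p\<^sup>2 * (2 * (N * \<gamma>\<^sup>2)) \<ge> p ^ 4 * (2 * (N * \<gamma>\<^sup>2))"
      using p4 N4 by (intro mult_right_mono) auto
    ultimately have "p\<^sup>2 * (N * \<gamma>) \<ge> p ^ 4 * (2 * (N * \<gamma>\<^sup>2))" by linarith
    thus ?thesis using big' by (simp add: algebra_simps)
  qed
  have n2: "N - 2 \<ge> N / 2" using N4 by simp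
  have b0: "(N - 2) * p\<^sup>2 * \<gamma> \<ge> p\<^sup>2 * (N * \<gamma>) / 2"
  proof -
    have "(N - 2) * (p\<^sup>2 * \<gamma>) \<ge> (N / 2) * (p\<^sup>2 * \<gamma>)"
      using n2 g by (intro mult_right_mono) auto
    thus ?thesis by (simp add: algebra_simps)
  qed
  have b: "(N - 2) * p\<^sup>2 * \<gamma> \<ge> 2" using b0 pNg L1 by linarith
  have e2b: "e2 \<ge> (N - 2) * p\<^sup>2 * \<gamma> / 2" unfolding e2_def using b by linarith
  have e1p: "e1 \<ge> 0"
  proof -
    have "p * (N * \<gamma>) / 2 \<ge> 0" using p a by simp
    thus ?thesis using e1b by linarith
  qed
  have e2p: "e2 \<ge> 0" using e2b b by simp
  have MB: "1 - er_prob n p (in_Gn n p \<gamma>) \<le>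
     N * (2 * exp (-2 * e1\<^sup>2 / (N - 1))) + N * N * exp (-2 * e2\<^sup>2 / (N - 2))"
    using main_bound[OF less_imp_le[OF p(1)] p(2) g n e1_def[unfolded N_def] e1p _ e2p] n
    unfolding N_def e2_def by (simp add: of_nat_diff)
  have c1: "2 * e1\<^sup>2 / (N - 1) \<ge> 2 * L"
  proof -
    have "e1\<^sup>2 \<ge> (p * (N * \<gamma>) / 2)\<^sup>2" using e1b p a by (intro power_mono) auto
    hence "2 * e1\<^sup>2 / (N - 1) \<ge> 2 * (p * (N * \<gamma>) / 2)\<^sup>2 / N"
      using N4 by (intro frac_le) auto
    also have "2 * (p * (N * \<gamma>) / 2)\<^sup>2 / N = p\<^sup>2 * (N * \<gamma>\<^sup>2) / 2"
      using N4 by (simp add: power2_eq_square field_simps)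
    also have "p\<^sup>2 * (N * \<gamma>\<^sup>2) / 2 \<ge> p ^ 4 * (N * \<gamma>\<^sup>2) / 2"
      using p4 g N4 by (intro divide_right_mono mult_right_mono) auto
    finally have h0: "p ^ 4 * (N * \<gamma>\<^sup>2) / 2 \<le> 2 * e1\<^sup>2 / (N - 1)" .
    have "p ^ 4 * (N * \<gamma>\<^sup>2) = N * \<gamma>\<^sup>2 * p ^ 4" by simp
    thus ?thesis using h0 big' L1 by linarith
  qed
  have c2: "2 * e2\<^sup>2 / (N - 2) \<ge> 3 * L"
  proof -
    have "e2\<^sup>2 \<ge> ((N - 2) * p\<^sup>2 * \<gamma> / 2)\<^sup>2" using e2b b by (intro power_mono) auto
    hence "2 * e2\<^sup>2 / (N - 2) \<ge> 2 * ((N - 2) * p\<^sup>2 * \<gamma> / 2)\<^sup>2 / (N - 2)"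
      using N4 by (intro divide_right_mono) auto
    also have "2 * ((N - 2) * p\<^sup>2 * \<gamma> / 2)\<^sup>2 / (N - 2) = (N - 2) * p ^ 4 * \<gamma>\<^sup>2 / 2"
      using N4 by (simp add: power2_eq_square field_simps eval_nat_numeral)
    also have "(N - 2) * p ^ 4 * \<gamma>\<^sup>2 / 2 \<ge> (N / 2) * p ^ 4 * \<gamma>\<^sup>2 / 2"
      using n2 p4pos by (intro divide_right_mono mult_right_mono) auto
    finally have h0: "(N / 2) * p ^ 4 * \<gamma>\<^sup>2 / 2 \<le> 2 * e2\<^sup>2 / (N - 2)" .
    have "(N / 2) * p ^ 4 * \<gamma>\<^sup>2 / 2 = (N * \<gamma>\<^sup>2 * p ^ 4) / 4" by simp
    thus ?thesis using h0 big' L1 by linarith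
  qed
  have x1: "exp (-2 * e1\<^sup>2 / (N - 1)) \<le> exp (- (2 * L))" using c1 by simp
  have x2: "exp (-2 * e2\<^sup>2 / (N - 2)) \<le> exp (- (3 * L))" using c2 by simp
  have expL: "exp L = N" unfolding L_def N_def using n by simp
  have y1: "exp (- (2 * L)) = 1 / (N * N)"
  proof -
    have "2 * L = L + L" by simp
    thus ?thesis by (simp only: exp_minus exp_add expL) (simp add: field_simps)
  qed
  have y2: "exp (- (3 * L)) = 1 / (N * N * N)"
  proof -
    have "3 * L = L + L + L" by simp
    thus ?thesis by (simp only: exp_minus exp_add expL) (simp add: field_simps)
  qed
  have "N * (2 * exp (-2 * e1\<^sup>2 / (N - 1))) + N * N * exp (-2 * e2\<^sup>2 / (N - 2))
      \<le> N * (2 * (1 / (N * N))) + N * N * (1 / (N * N * N))"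
    using x1 x2 y1 y2 N4 by (intro add_mono mult_left_mono) auto
  also have "\<dots> = 3 / N" using N4 by (simp add: field_simps)
  finally show ?thesis using MB unfolding N_def by simp
qed



lemma p0_case: "er_prob n 0 (in_Gn n 0 \<gamma>) = 1"
proof -
  have "er_prob n 0 (in_Gn n 0 \<gamma>) = measure_pmf.prob (Pi_pmf (all_edges n) False (\<lambda>_. bernoulli_pmf 0))
            {f. in_Gn n 0 \<gamma> {e\<in>all_edges n. f e}}" by (rule er_prob_pmf) auto
  also have "Pi_pmf (all_edges n) False (\<lambda>_. bernoulli_pmf 0) = return_pmf (\<lambda>_. False)"
  proof -
    have b0: "bernoulli_pmf 0 = return_pmf False" by (rule pmf_eqI) (simp add: indicator_def)
    show ?thesis by (simp add: b0 finite_all_edges)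
  qed
  also have "in_Gn n 0 \<gamma> {e\<in>all_edges n. (\<lambda>_. False) e}"
    unfolding in_Gn_def nbrs_def by simp
  hence "measure_pmf.prob (return_pmf (\<lambda>_. False)) {f. in_Gn n 0 \<gamma> {e\<in>all_edges n. f e}} = 1"
    by (simp add: indicator_def)
  finally show ?thesis .
qed

theorem lemma1:
  fixes p :: real and \<gamma> :: "nat \<Rightarrow> real"
  assumes "0 \<le> p" "p \<le> 1"
    and "\<And>n. 0 \<le> \<gamma> n \<and> \<gamma> n \<le> 1/2"
    and "filterlim (\<lambda>n. \<gamma> n / sqrt (ln (real n) / real n)) at_top sequentially"
    and "\<gamma> \<longlonglongrightarrow> 0"
  shows "\<exists>\<theta> :: nat \<Rightarrow> real. \<theta> \<longlonglongrightarrow> 0 \<and>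
           (\<forall>n. er_prob n p (in_Gn n p (\<gamma> n)) \<ge> 1 - \<theta> n)"
proof -
  define \<theta> where "\<theta> = (\<lambda>n. 1 - er_prob n p (in_Gn n p (\<gamma> n)))"
  have "\<theta> \<longlonglongrightarrow> 0"
  proof (cases "p = 0")
    case True
    hence "\<theta> = (\<lambda>_. 0)" unfolding \<theta>_def by (simp add: p0_case)
    thus ?thesis by simp
  next
    case False
    hence p: "0 < p" "p \<le> 1" using assms(1,2) by auto
    define K where "K = 24 / p ^ 4"
    have ev1: "eventually (\<lambda>n. sqrt K \<le> \<gamma> n / sqrt (ln (real n) / real n)) sequentially"
      using assms(4) unfolding filterlim_at_top by blast
    have ev: "eventually (\<lambda>n. \<theta> n \<le> 3 / real n) sequentially"
      using ev1 eventually_ge_at_top[of "4::nat"]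
    proof eventually_elim
      case (elim n)
      have n4: "real n \<ge> 4" using elim(2) by simp
      have lnpos: "ln (real n) > 0" using n4 by simp
      define s where "s = sqrt (ln (real n) / real n)"
      have spos: "s > 0" unfolding s_def using lnpos n4 by simp
      have "sqrt K * s \<le> \<gamma> n" using elim(1) spos unfolding s_def[symmetric] by (simp add: pos_le_divide_eq)
      moreover have "0 \<le> sqrt K * s" using spos K_def p by simp
      ultimately have "(sqrt K * s)\<^sup>2 \<le> (\<gamma> n)\<^sup>2" by (rule power_mono)
      also have "(sqrt K * s)\<^sup>2 = K * (ln (real n) / real n)"
        unfolding s_def using K_def p lnpos n4 by (simp add: power_mult_distrib)
      finally have h: "K * (ln (real n) / real n) \<le> (\<gamma> n)\<^sup>2" .
      have "real n * (K * (ln (real n) / real n)) \<le> real n * (\<gamma> n)\<^sup>2"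
        using h n4 by (intro mult_left_mono) auto
      hence "K * ln (real n) \<le> real n * (\<gamma> n)\<^sup>2" using n4 by simp
      hence "K * ln (real n) * p ^ 4 \<le> real n * (\<gamma> n)\<^sup>2 * p ^ 4"
        using p by (intro mult_right_mono) auto
      moreover have "K * ln (real n) * p ^ 4 = 24 * ln (real n)" unfolding K_def using p by simp
      ultimately have big: "real n * (\<gamma> n)\<^sup>2 * p ^ 4 \<ge> 24 * ln (real n)" by simp
      show ?case unfolding \<theta>_def
        by (rule asym_bound[OF p _ _ elim(2) big]) (use assms(3) in auto)
    qed
    have ev0: "eventually (\<lambda>n. 0 \<le> \<theta> n) sequentially"
    proof (rule always_eventually, rule allI)
      fix n
      have "er_prob n p (in_Gn n p (\<gamma> n)) \<le> 1"
        using er_prob_pmf[OF assms(1,2)] measure_pmf.prob_le_1 by metis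
      thus "0 \<le> \<theta> n" unfolding \<theta>_def by simp
    qed
    have lim: "(\<lambda>n. 3 / real n) \<longlonglongrightarrow> 0"
      by (rule lim_const_over_n)
    show ?thesis by (rule tendsto_sandwich[OF ev0 ev tendsto_const lim])
  qed
  moreover have "\<forall>n. er_prob n p (in_Gn n p (\<gamma> n)) \<ge> 1 - \<theta> n" unfolding \<theta>_def by simp
  ultimately show ?thesis by blast
qed

end
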